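(* Let $\mathbb{A}=(\mathbb{L},\Box_s,\Diamond_s,\Box_\ell,\Diamond_\ell)$ be an abstract Kent algebra. Then: (i) $\mathbb{A}$ satisfies, for all $a,b$, "$\Box_\ell a\le\Box_\ell b$ and $\Diamond_\ell a\le\Diamond_\ell b$ imply $a\le b$" if and only if $a\wedge\Box_\ell b\le\Diamond_\ell a\vee b$ for all $a,b\in\mathbb{L}$; (ii) $\mathbb{A}$ satisfies, for all $a,b$, "$\Box_s a\le\Box_s b$ and $\Diamond_s a\le\Diamond_s b$ imply $a\le b$" if and only if $a\wedge\Diamond_s b\le\Box_s a\vee b$ for all $a,b\in\mathbb{L}$.
   Context: An abstract Kent algebra (aKa) is a structure $(\mathbb{L},\Box_s,\Diamond_s,\Box_\ell,\Diamond_\ell)$ where $\mathbb{L}$ is a lattice and the four unary operations satisfy, for all $a,b$: $\Diamond_s a\le b\iff a\le\Box_s b$; $\Diamond_\ell a\le b\iff a\le\Box_\ell b$; $\Box_s a\le a$, $a\le\Diamond_s a$, $a\le\Box_\ell a$, $\Diamond_\ell a\le a$; $\Box_s a\le\Box_s\Box_s a$, $\Diamond_s\Diamond_s a\le\Diamond_s a$, $\Box_\ell\Box_\ell a\le\Box_\ell a$, $\Diamond_\ell a\le\Diamond_\ell\Diamond_\ell a$. An aKa satisfying the quasi-inequality in (i) is called a K-IA3$_\ell$; one satisfying the quasi-inequality in (ii) is called a K-IA3$_s$. *)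

theory Defs
  imports Main
begin

text \<open>Abstract Kent algebra: a lattice (the type class) with four unary operations
  bs (box_s), ds (diamond_s), bl (box_ell), dl (diamond_ell).\<close>

definition aKa :: "('a::lattice \<Rightarrow> 'a) \<Rightarrow> ('a \<Rightarrow> 'a) \<Rightarrow> ('a \<Rightarrow> 'a) \<Rightarrow> ('a \<Rightarrow> 'a) \<Rightarrow> bool" where
  "aKa bs ds bl dl \<longleftrightarrow>
     (\<forall>a b. ds a \<le> b \<longleftrightarrow> a \<le> bs b) \<and>
     (\<forall>a b. dl a \<le> b \<longleftrightarrow> a \<le> bl b) \<and>
     (\<forall>a. bs a \<le> a) \<and> (\<forall>a. a \<le> ds a) \<and> (\<forall>a. a \<le> bl a) \<and> (\<forall>a. dl a \<le> a) \<and>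
     (\<forall>a. bs a \<le> bs (bs a)) \<and> (\<forall>a. ds (ds a) \<le> ds a) \<and>
     (\<forall>a. bl (bl a) \<le> bl a) \<and> (\<forall>a. dl a \<le> dl (dl a))"

end

theory Submission
  imports Defs
begin

theorem mainTheorem6:
  fixes bs ds bl dl :: "'a::lattice \<Rightarrow> 'a"
  assumes "aKa bs ds bl dl"
  shows "((\<forall>a b. bl a \<le> bl b \<and> dl a \<le> dl b \<longrightarrow> a \<le> b) \<longleftrightarrow>
           (\<forall>a b. inf a (bl b) \<le> sup (dl a) b))
       \<and> ((\<forall>a b. bs a \<le> bs b \<and> ds a \<le> ds b \<longrightarrow> a \<le> b) \<longleftrightarrow>
           (\<forall>a b. inf a (ds b) \<le> sup (bs a) b))"
proof -
  note A = assms[unfolded aKa_def]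
  have adjs: "\<And>a b. ds a \<le> b \<longleftrightarrow> a \<le> bs b" and adjl: "\<And>a b. dl a \<le> b \<longleftrightarrow> a \<le> bl b"
    using A by blast+
  have bs1: "\<And>a. bs a \<le> a" and ds1: "\<And>a. a \<le> ds a" and bl1: "\<And>a. a \<le> bl a" and dl1: "\<And>a. dl a \<le> a"
    using A by blast+
  have bs2: "\<And>a. bs a \<le> bs (bs a)" and ds2: "\<And>a. ds (ds a) \<le> ds a"
    and bl2: "\<And>a. bl (bl a) \<le> bl a" and dl2: "\<And>a. dl a \<le> dl (dl a)"
    using A by blast+
  have mdl: "\<And>a b. a \<le> b \<Longrightarrow> dl a \<le> dl b"
    by (metis adjl order_refl order_trans)
  have mbl: "\<And>a b. a \<le> b \<Longrightarrow> bl a \<le> bl b"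
    by (metis adjl order_refl order_trans)
  have mds: "\<And>a b. a \<le> b \<Longrightarrow> ds a \<le> ds b"
    by (metis adjs order_refl order_trans)
  have mbs: "\<And>a b. a \<le> b \<Longrightarrow> bs a \<le> bs b"
    by (metis adjs order_refl order_trans)
  have dlI: "\<And>a. dl (dl a) = dl a" using dl1 dl2 by (simp add: order_antisym)
  have blI: "\<And>a. bl (bl a) = bl a" using bl1 bl2 by (simp add: order_antisym)
  have dsI: "\<And>a. ds (ds a) = ds a" using ds1 ds2 by (simp add: order_antisym)
  have bsI: "\<And>a. bs (bs a) = bs a" using bs1 bs2 by (simp add: order_antisym)
  have P1: "(\<forall>a b. bl a \<le> bl b \<and> dl a \<le> dl b \<longrightarrow> a \<le> b) \<longleftrightarrow>
           (\<forall>a b. inf a (bl b) \<le> sup (dl a) b)"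
  proof
    assume Q: "\<forall>a b. bl a \<le> bl b \<and> dl a \<le> dl b \<longrightarrow> a \<le> b"
    show "\<forall>a b. inf a (bl b) \<le> sup (dl a) b"
    proof (intro allI)
      fix a b
      have "bl (inf a (bl b)) \<le> bl (sup (dl a) b)"
        by (metis blI inf_le2 mbl sup_ge2 order_trans)
      moreover have "dl (inf a (bl b)) \<le> dl (sup (dl a) b)"
        by (metis dlI inf_le1 mdl sup_ge1 order_trans)
      ultimately show "inf a (bl b) \<le> sup (dl a) b" using Q by blast
    qed
  next
    assume R: "\<forall>a b. inf a (bl b) \<le> sup (dl a) b"
    show "\<forall>a b. bl a \<le> bl b \<and> dl a \<le> dl b \<longrightarrow> a \<le> b"
    proof (intro allI impI)
      fix a b assume h: "bl a \<le> bl b \<and> dl a \<le> dl b"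
      have "a \<le> inf a (bl b)" using h bl1[of a] by (meson inf.boundedI order_refl order_trans)
      also have "\<dots> \<le> sup (dl a) b" using R by blast
      also have "\<dots> \<le> b" using h dl1[of b] by (meson le_sup_iff order_refl order_trans)
      finally show "a \<le> b" .
    qed
  qed
  have P2: "(\<forall>a b. bs a \<le> bs b \<and> ds a \<le> ds b \<longrightarrow> a \<le> b) \<longleftrightarrow>
           (\<forall>a b. inf a (ds b) \<le> sup (bs a) b)"
  proof
    assume Q: "\<forall>a b. bs a \<le> bs b \<and> ds a \<le> ds b \<longrightarrow> a \<le> b"
    show "\<forall>a b. inf a (ds b) \<le> sup (bs a) b"
    proof (intro allI)
      fix a b
      have "bs (inf a (ds b)) \<le> bs (sup (bs a) b)"
        by (metis bsI inf_le1 mbs sup_ge1 order_trans)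
      moreover have "ds (inf a (ds b)) \<le> ds (sup (bs a) b)"
        by (metis dsI inf_le2 mds sup_ge2 order_trans)
      ultimately show "inf a (ds b) \<le> sup (bs a) b" using Q by blast
    qed
  next
    assume R: "\<forall>a b. inf a (ds b) \<le> sup (bs a) b"
    show "\<forall>a b. bs a \<le> bs b \<and> ds a \<le> ds b \<longrightarrow> a \<le> b"
    proof (intro allI impI)
      fix a b assume h: "bs a \<le> bs b \<and> ds a \<le> ds b"
      have "a \<le> inf a (ds b)" using h ds1[of a] by (meson inf.boundedI order_refl order_trans)
      also have "\<dots> \<le> sup (bs a) b" using R by blast
      also have "\<dots> \<le> b" using h bs1[of b] by (meson le_sup_iff order_refl order_trans)
      finally show "a \<le> b" .
    qed
  qed
  show ?thesis using P1 P2 by blast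
qed

end
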